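(* Let $(V,\cdot,\psi)$ be a finite-dimensional Hom-left-symmetric algebra such that $u\cdot v=\psi^2(u)\cdot v$ for all $u,v\in V$. Let $\{v_1,\dots,v_n\}$ be a basis of $V$ and $\{v^1,\dots,v^n\}$ its dual basis. Then: (a) $r_1=\sum_iv^i\wedge v_i$ and $r_2=\sum_iv^i\wedge\psi^2(v_i)$ are solutions of the classical Hom-Yang-Baxter equation in the Hom-Lie algebra $\mathfrak g(V)\ltimes_{L^\circ}V^*$. (b) If in addition the commutator Hom-Lie algebra $(\mathfrak g(V),[\cdot,\cdot]_V,\psi)$ is weakly involutive, then there are coboundary Hom-Lie bialgebra structures on $\mathfrak g(V)\ltimes_{L^\circ}V^*$ induced by $r_1$ and by $r_2$ respectively, and these two coboundary Hom-Lie bialgebra structures coincide.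
   Context: A Hom-left-symmetric algebra $(V,\cdot,\psi)$ is a vector space $V$ with a bilinear product $\cdot$ and a linear map $\psi$ with $\psi(u\cdot v)=\psi(u)\cdot\psi(v)$ and $(u\cdot v)\cdot\psi(w)-\psi(u)\cdot(v\cdot w)=(v\cdot u)\cdot\psi(w)-\psi(v)\cdot(u\cdot w)$. Its commutator Hom-Lie algebra $\mathfrak g(V)$ is $V$ with $[u,v]_V=u\cdot v-v\cdot u$ and twisting map $\psi$; $L_uv=u\cdot v$. Define $L^\circ:V\to\mathfrak{gl}(V^* )$ by $\langle L^\circ_u\xi,v\rangle=-\langle\xi,\psi(u)\cdot v\rangle$. $\mathfrak g(V)\ltimes_{L^\circ}V^*$ is $V\oplus V^*$ with bracket $[(u,\xi),(v,\eta)]=([u,v]_V,L^\circ_u\eta-L^\circ_v\xi)$ and twisting map $\psi\oplus\psi^*$. $a\wedge b=a\otimes b-b\otimes a$. A Hom-Lie algebra $(\mathfrak h,[\cdot,\cdot],\phi)$: skew-symmetric bracket, $\phi[x,y]=[\phi x,\phi y]$, $[\phi(x),[y,z]]+[\phi(y),[z,x]]+[\phi(z),[x,y]]=0$; weakly involutive if $[\phi^2(x),y]=[x,y]$. For $r=\sum_ix_i\otimes y_i$, $[r,r]=\sum_{i,j}([x_i,x_j]\otimes\phi(y_i)\otimes\phi(y_j)+\phi(x_i)\otimes[y_i,x_j]\otimes\phi(y_j)+\phi(x_i)\otimes\phi(x_j)\otimes[y_i,y_j])$; the classical Hom-Yang-Baxter equation is $[r,r]=0$. For $z\in\mathfrak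 h$, $t\in\mathfrak h\otimes\mathfrak h$: $\mathrm{ad}_zt=(\mathrm{ad}_z\otimes\phi+\phi\otimes\mathrm{ad}_z)t$. A Hom-Lie bialgebra $(\mathfrak h,\Delta)$: $\mathfrak h$ weakly involutive, $\Delta:\mathfrak h\to\mathfrak h\otimes\mathfrak h$ such that $\mathfrak h^*$ with $\langle[a,b],x\rangle=\langle\Delta(x),a\otimes b\rangle$ and $\phi^*$ is a weakly involutive Hom-Lie algebra and $\Delta[x,y]=\mathrm{ad}_{\phi(x)}\Delta(y)-\mathrm{ad}_{\phi(y)}\Delta(x)$. The coboundary structure induced by $r$ (with $(\phi\otimes\mathrm{Id})r=(\mathrm{Id}\otimes\phi)r$) is $\Delta(x)=\mathrm{ad}_xr$. *)

theory Defs
  imports Main "HOL-Library.Function_Algebras"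
begin

text \<open>Finite-dimensional vector spaces over a field 'k are modelled in coordinates as
  functions 'i \<Rightarrow> 'k with 'i a finite index type (pointwise addition from
  Function_Algebras). Tensor powers are functions on pairs / triples of indices.\<close>

definition vsc :: "'k::times \<Rightarrow> ('i \<Rightarrow> 'k) \<Rightarrow> ('i \<Rightarrow> 'k)" where
  "vsc c u = (\<lambda>i. c * u i)"

definition lin :: "(('i \<Rightarrow> 'k::field) \<Rightarrow> ('j \<Rightarrow> 'k)) \<Rightarrow> bool" where
  "lin f \<longleftrightarrow> (\<forall>u v. f (u + v) = f u + f v) \<and> (\<forall>c u. f (vsc c u) = vsc c (f u))"

definition bilin :: "(('i \<Rightarrow> 'k::field) \<Rightarrow> ('j \<Rightarrow> 'k) \<Rightarrow> ('l \<Rightarrow> 'k)) \<Rightarrow> bool" where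
  "bilin m \<longleftrightarrow> (\<forall>u. lin (m u)) \<and> (\<forall>v. lin (\<lambda>u. m u v))"

definition ev :: "'i \<Rightarrow> 'i \<Rightarrow> 'k::field" where
  "ev a = (\<lambda>b. if b = a then 1 else 0)"

text \<open>natural pairing of a dual vector (in dual coordinates) with a vector\<close>
definition dpair :: "('i::finite \<Rightarrow> 'k::field) \<Rightarrow> ('i \<Rightarrow> 'k) \<Rightarrow> 'k" where
  "dpair \<xi> v = (\<Sum>i\<in>UNIV. \<xi> i * v i)"

definition is_basis :: "('n::finite \<Rightarrow> 'n \<Rightarrow> 'k::field) \<Rightarrow> bool" where
  "is_basis b \<longleftrightarrow> (\<forall>v. \<exists>!c. v = (\<Sum>i\<in>UNIV. vsc (c i) (b i)))"

definition tensor2 :: "('i \<Rightarrow> 'k::field) \<Rightarrow> ('i \<Rightarrow> 'k) \<Rightarrow> ('i \<times> 'i \<Rightarrow> 'k)" where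
  "tensor2 x y = (\<lambda>(a, b). x a * y b)"

definition tensor3 :: "('i \<Rightarrow> 'k::field) \<Rightarrow> ('i \<Rightarrow> 'k) \<Rightarrow> ('i \<Rightarrow> 'k) \<Rightarrow> ('i \<times> 'i \<times> 'i \<Rightarrow> 'k)" where
  "tensor3 x y z = (\<lambda>(a, b, c). x a * y b * z c)"

text \<open>(A \<otimes> B) t for a 2-tensor t\<close>
definition tmap2 :: "(('i::finite \<Rightarrow> 'k::field) \<Rightarrow> ('i \<Rightarrow> 'k)) \<Rightarrow> (('i \<Rightarrow> 'k) \<Rightarrow> ('i \<Rightarrow> 'k))
    \<Rightarrow> ('i \<times> 'i \<Rightarrow> 'k) \<Rightarrow> ('i \<times> 'i \<Rightarrow> 'k)" where
  "tmap2 A B t = (\<Sum>p\<in>UNIV. vsc (t p) (tensor2 (A (ev (fst p))) (B (ev (snd p)))))"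

definition tensor_of :: "'j set \<Rightarrow> ('j \<Rightarrow> 'i \<Rightarrow> 'k::field) \<Rightarrow> ('j \<Rightarrow> 'i \<Rightarrow> 'k) \<Rightarrow> ('i \<times> 'i \<Rightarrow> 'k)" where
  "tensor_of I x y = (\<Sum>j\<in>I. tensor2 (x j) (y j))"

text \<open>[r,r] for r = \<Sum>_{i\<in>I} x_i \<otimes> y_i\<close>
definition CYB :: "(('i \<Rightarrow> 'k::field) \<Rightarrow> ('i \<Rightarrow> 'k) \<Rightarrow> ('i \<Rightarrow> 'k)) \<Rightarrow> (('i \<Rightarrow> 'k) \<Rightarrow> ('i \<Rightarrow> 'k))
    \<Rightarrow> 'j set \<Rightarrow> ('j \<Rightarrow> 'i \<Rightarrow> 'k) \<Rightarrow> ('j \<Rightarrow> 'i \<Rightarrow> 'k) \<Rightarrow> ('i \<times> 'i \<times> 'i \<Rightarrow> 'k)" where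
  "CYB br phi I x y = (\<Sum>i\<in>I. \<Sum>j\<in>I.
      tensor3 (br (x i) (x j)) (phi (y i)) (phi (y j))
    + tensor3 (phi (x i)) (br (y i) (x j)) (phi (y j))
    + tensor3 (phi (x i)) (phi (x j)) (br (y i) (y j)))"

text \<open>a \<wedge> b families: \<Sum>_i a_i \<wedge> b_i = \<Sum>_i (a_i \<otimes> b_i - b_i \<otimes> a_i), written as \<Sum>_{p} x_p \<otimes> y_p
  with p ranging over 'n \<times> bool\<close>
definition wedge_x :: "('n \<Rightarrow> 'i \<Rightarrow> 'k::field) \<Rightarrow> ('n \<Rightarrow> 'i \<Rightarrow> 'k) \<Rightarrow> ('n \<times> bool \<Rightarrow> 'i \<Rightarrow> 'k)" where
  "wedge_x a b p = (if snd p then a (fst p) else - b (fst p))"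

definition wedge_y :: "('n \<Rightarrow> 'i \<Rightarrow> 'k::field) \<Rightarrow> ('n \<Rightarrow> 'i \<Rightarrow> 'k) \<Rightarrow> ('n \<times> bool \<Rightarrow> 'i \<Rightarrow> 'k)" where
  "wedge_y a b p = (if snd p then b (fst p) else a (fst p))"

definition hom_lie :: "(('i::finite \<Rightarrow> 'k::field) \<Rightarrow> ('i \<Rightarrow> 'k) \<Rightarrow> ('i \<Rightarrow> 'k)) \<Rightarrow> (('i \<Rightarrow> 'k) \<Rightarrow> ('i \<Rightarrow> 'k)) \<Rightarrow> bool" where
  "hom_lie br phi \<longleftrightarrow> bilin br \<and> lin phi
     \<and> (\<forall>x y. br x y = - br y x)
     \<and> (\<forall>x y. phi (br x y) = br (phi x) (phi y))
     \<and> (\<forall>x y z. br (phi x) (br y z) + br (phi y) (br z x) + br (phi z) (br x y) = 0)"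

definition weakly_inv :: "(('i \<Rightarrow> 'k) \<Rightarrow> ('i \<Rightarrow> 'k) \<Rightarrow> ('i \<Rightarrow> 'k)) \<Rightarrow> (('i \<Rightarrow> 'k) \<Rightarrow> ('i \<Rightarrow> 'k)) \<Rightarrow> bool" where
  "weakly_inv br phi \<longleftrightarrow> (\<forall>x y. br (phi (phi x)) y = br x y)"

definition ad_t :: "(('i::finite \<Rightarrow> 'k::field) \<Rightarrow> ('i \<Rightarrow> 'k) \<Rightarrow> ('i \<Rightarrow> 'k)) \<Rightarrow> (('i \<Rightarrow> 'k) \<Rightarrow> ('i \<Rightarrow> 'k))
    \<Rightarrow> ('i \<Rightarrow> 'k) \<Rightarrow> ('i \<times> 'i \<Rightarrow> 'k) \<Rightarrow> ('i \<times> 'i \<Rightarrow> 'k)" where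
  "ad_t br phi z t = tmap2 (br z) phi t + tmap2 phi (br z) t"

text \<open>bracket on the dual: <[a,b],x> = <\<Delta>(x), a \<otimes> b>; dual elements in dual coordinates\<close>
definition dual_br :: "(('i::finite \<Rightarrow> 'k::field) \<Rightarrow> ('i \<times> 'i \<Rightarrow> 'k)) \<Rightarrow> ('i \<Rightarrow> 'k) \<Rightarrow> ('i \<Rightarrow> 'k) \<Rightarrow> ('i \<Rightarrow> 'k)" where
  "dual_br Delta a b = (\<lambda>p. \<Sum>q\<in>UNIV. Delta (ev p) q * (a (fst q) * b (snd q)))"

text \<open>transpose map: <\<phi>* \<alpha>, x> = <\<alpha>, \<phi> x>\<close>
definition dual_map :: "(('i::finite \<Rightarrow> 'k::field) \<Rightarrow> ('i \<Rightarrow> 'k)) \<Rightarrow> ('i \<Rightarrow> 'k) \<Rightarrow> ('i \<Rightarrow> 'k)" where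
  "dual_map phi \<alpha> = (\<lambda>p. dpair \<alpha> (phi (ev p)))"

definition hom_lie_bialg :: "(('i::finite \<Rightarrow> 'k::field) \<Rightarrow> ('i \<Rightarrow> 'k) \<Rightarrow> ('i \<Rightarrow> 'k)) \<Rightarrow> (('i \<Rightarrow> 'k) \<Rightarrow> ('i \<Rightarrow> 'k))
    \<Rightarrow> (('i \<Rightarrow> 'k) \<Rightarrow> ('i \<times> 'i \<Rightarrow> 'k)) \<Rightarrow> bool" where
  "hom_lie_bialg br phi Delta \<longleftrightarrow>
     hom_lie br phi \<and> weakly_inv br phi \<and> lin Delta
     \<and> hom_lie (dual_br Delta) (dual_map phi) \<and> weakly_inv (dual_br Delta) (dual_map phi)
     \<and> (\<forall>x y. Delta (br x y) = ad_t br phi (phi x) (Delta y) - ad_t br phi (phi y) (Delta x))"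

definition cobound :: "(('i::finite \<Rightarrow> 'k::field) \<Rightarrow> ('i \<Rightarrow> 'k) \<Rightarrow> ('i \<Rightarrow> 'k)) \<Rightarrow> (('i \<Rightarrow> 'k) \<Rightarrow> ('i \<Rightarrow> 'k))
    \<Rightarrow> ('i \<times> 'i \<Rightarrow> 'k) \<Rightarrow> ('i \<Rightarrow> 'k) \<Rightarrow> ('i \<times> 'i \<Rightarrow> 'k)" where
  "cobound br phi r = (\<lambda>x. ad_t br phi x r)"

definition hom_lsa :: "(('n::finite \<Rightarrow> 'k::field) \<Rightarrow> ('n \<Rightarrow> 'k) \<Rightarrow> ('n \<Rightarrow> 'k)) \<Rightarrow> (('n \<Rightarrow> 'k) \<Rightarrow> ('n \<Rightarrow> 'k)) \<Rightarrow> bool" where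
  "hom_lsa m psi \<longleftrightarrow> bilin m \<and> lin psi
     \<and> (\<forall>u v. psi (m u v) = m (psi u) (psi v))
     \<and> (\<forall>u v w. m (m u v) (psi w) - m (psi u) (m v w) = m (m v u) (psi w) - m (psi v) (m u w))"

definition comm :: "(('n \<Rightarrow> 'k::field) \<Rightarrow> ('n \<Rightarrow> 'k) \<Rightarrow> ('n \<Rightarrow> 'k)) \<Rightarrow> ('n \<Rightarrow> 'k) \<Rightarrow> ('n \<Rightarrow> 'k) \<Rightarrow> ('n \<Rightarrow> 'k)" where
  "comm m u v = m u v - m v u"

text \<open><L\<degree>_u \<xi>, v> = - <\<xi>, \<psi>(u) \<cdot> v>, in dual coordinates\<close>
definition Lcirc :: "(('n::finite \<Rightarrow> 'k::field) \<Rightarrow> ('n \<Rightarrow> 'k) \<Rightarrow> ('n \<Rightarrow> 'k)) \<Rightarrow> (('n \<Rightarrow> 'k) \<Rightarrow> ('n \<Rightarrow> 'k))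
    \<Rightarrow> ('n \<Rightarrow> 'k) \<Rightarrow> ('n \<Rightarrow> 'k) \<Rightarrow> ('n \<Rightarrow> 'k)" where
  "Lcirc m psi u \<xi> = (\<lambda>j. - dpair \<xi> (m (psi u) (ev j)))"

text \<open>V \<oplus> V* as coordinates on 'n + 'n (Inl: V part, Inr: V* part)\<close>
definition mkp :: "('n \<Rightarrow> 'k) \<Rightarrow> ('n \<Rightarrow> 'k) \<Rightarrow> ('n + 'n \<Rightarrow> 'k)" where
  "mkp u \<xi> = (\<lambda>a. case a of Inl i \<Rightarrow> u i | Inr i \<Rightarrow> \<xi> i)"

definition vpart :: "('n + 'n \<Rightarrow> 'k) \<Rightarrow> ('n \<Rightarrow> 'k)" where
  "vpart x = (\<lambda>i. x (Inl i))"

definition dpart :: "('n + 'n \<Rightarrow> 'k) \<Rightarrow> ('n \<Rightarrow> 'k)" where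
  "dpart x = (\<lambda>i. x (Inr i))"

definition sd_br :: "(('n::finite \<Rightarrow> 'k::field) \<Rightarrow> ('n \<Rightarrow> 'k) \<Rightarrow> ('n \<Rightarrow> 'k)) \<Rightarrow> (('n \<Rightarrow> 'k) \<Rightarrow> ('n \<Rightarrow> 'k))
    \<Rightarrow> ('n + 'n \<Rightarrow> 'k) \<Rightarrow> ('n + 'n \<Rightarrow> 'k) \<Rightarrow> ('n + 'n \<Rightarrow> 'k)" where
  "sd_br m psi x y = mkp (comm m (vpart x) (vpart y))
      (Lcirc m psi (vpart x) (dpart y) - Lcirc m psi (vpart y) (dpart x))"

definition sd_tw :: "(('n::finite \<Rightarrow> 'k::field) \<Rightarrow> ('n \<Rightarrow> 'k)) \<Rightarrow> ('n + 'n \<Rightarrow> 'k) \<Rightarrow> ('n + 'n \<Rightarrow> 'k)" where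
  "sd_tw psi x = mkp (psi (vpart x)) (dual_map psi (dpart x))"

end

theory Submission
  imports Defs
begin


lemma mult_if01[simp]: "(a::'k::field) * (if P then 1 else 0) = (if P then a else 0)" "(if P then 1 else 0) * a = (if P then a else 0)" by simp_all


lemma vsc_apply[simp]: "vsc c u i = c * u i" by (simp add: vsc_def)

lemma sum_apply: "(\<Sum>i\<in>A. f i) x = (\<Sum>i\<in>A. f i x)"
proof (cases "finite A")
  case True thus ?thesis by (induction A rule: finite_induct) auto
qed simp

lemma sum_UNIV_sum: "(\<Sum>x\<in>(UNIV::('a::finite + 'b::finite) set). g x) = (\<Sum>a\<in>UNIV. g (Inl a)) + (\<Sum>b\<in>UNIV. g (Inr b))"
  using sum.Plus[of "UNIV::'a set" "UNIV::'b set" g] by (simp add: comp_def)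

lemma sum_UNIV_prod: "(\<Sum>x\<in>(UNIV::('a::finite \<times> 'b::finite) set). g x) = (\<Sum>a\<in>UNIV. \<Sum>b\<in>UNIV. g (a,b))"
  using sum.cartesian_product[of "\<lambda>a b. g (a,b)" "UNIV::'b set" "UNIV::'a set"] by simp

lemma sum_UNIV_nb: "(\<Sum>x\<in>(UNIV::('a::finite \<times> bool) set). g x) = (\<Sum>a\<in>UNIV. g (a,True) + g (a,False))"
  by (simp add: sum_UNIV_prod UNIV_bool add.commute)

lemma ev_apply: "ev a b = (if b = a then 1 else 0)" by (simp add: ev_def)

lemma expand_vec: "(u::'i::finite \<Rightarrow> 'k::field) = (\<Sum>i\<in>UNIV. vsc (u i) (ev i))"
  by (rule ext) (simp add: sum_apply ev_def)

lemma lin_add: "lin f \<Longrightarrow> f (u + v) = f u + f v" by (simp add: lin_def)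
lemma lin_vsc: "lin f \<Longrightarrow> f (vsc c u) = vsc c (f u)" by (simp add: lin_def)
lemma lin_zero: "lin f \<Longrightarrow> f 0 = 0"
  using lin_vsc[of f 0 0] by (simp add: vsc_def zero_fun_def)
lemma lin_neg: "lin f \<Longrightarrow> f (- u) = - f u"
proof -
  assume l: "lin f"
  have "- u = vsc (-1) u" by (rule ext) simp
  hence "f (- u) = vsc (-1) (f u)" using lin_vsc[OF l] by simp
  also have "\<dots> = - f u" by (rule ext) simp
  finally show ?thesis .
qed
lemma lin_diff: "lin f \<Longrightarrow> f (u - v) = f u - f v"
  using lin_add[of f u "- v"] lin_neg[of f v] by simp
lemma lin_sum: "lin f \<Longrightarrow> f (\<Sum>i\<in>A. g i) = (\<Sum>i\<in>A. f (g i))"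
proof (cases "finite A")
  case True assume l: "lin f"
  from True show ?thesis
  proof (induction A rule: finite_induct)
    case empty show ?case by (simp only: sum.empty lin_zero[OF l])
  next
    case (insert x F)
    have "f (sum g (insert x F)) = f (g x + sum g F)" by (simp only: sum.insert[OF insert.hyps])
    also have "\<dots> = f (g x) + f (sum g F)" by (rule lin_add[OF l])
    finally show ?case by (simp only: insert.IH sum.insert[OF insert.hyps])
  qed
next
  case False assume l: "lin f" with False show ?thesis by (simp only: sum.infinite[OF False] lin_zero[OF l])
qed

lemma lin_expand: "lin f \<Longrightarrow> f (u::'i::finite \<Rightarrow> 'k::field) x = (\<Sum>i\<in>UNIV. u i * f (ev i) x)"
proof -
  assume l: "lin f"
  have "f u = f (\<Sum>i\<in>UNIV. vsc (u i) (ev i))" using expand_vec[of u] by simp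
  also have "\<dots> = (\<Sum>i\<in>UNIV. vsc (u i) (f (ev i)))" by (simp add: lin_sum[OF l] lin_vsc[OF l])
  finally show ?thesis by (simp add: sum_apply)
qed

lemma lin_id[simp]: "lin (\<lambda>x. x)" by (simp add: lin_def)
lemma lin_id'[simp]: "lin id" by (simp add: lin_def)
lemma lin_comp: "lin f \<Longrightarrow> lin g \<Longrightarrow> lin (\<lambda>x. f (g x))" by (simp add: lin_def)
lemma lin_comp': "lin f \<Longrightarrow> lin g \<Longrightarrow> lin (f \<circ> g)" by (simp add: lin_def)

lemma bilin1: "bilin m \<Longrightarrow> lin (m u)" by (simp add: bilin_def)
lemma bilin2: "bilin m \<Longrightarrow> lin (\<lambda>u. m u v)" by (simp add: bilin_def)

definition slin :: "(('i \<Rightarrow> 'k::field) \<Rightarrow> 'k) \<Rightarrow> bool" where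
  "slin h \<longleftrightarrow> (\<forall>u v. h (u + v) = h u + h v) \<and> (\<forall>c u. h (vsc c u) = c * h u)"

lemma slin_coord: "lin f \<Longrightarrow> slin (\<lambda>u. f u x)" by (simp add: lin_def slin_def)

lemma dpair_add2: "dpair \<xi> (u + v) = dpair \<xi> u + dpair \<xi> v"
  by (simp add: dpair_def sum.distrib algebra_simps)
lemma dpair_vsc2: "dpair \<xi> (vsc c u) = c * dpair \<xi> u"
  by (simp add: dpair_def sum_distrib_left algebra_simps)
lemma dpair_add1: "dpair (u + v) \<xi> = dpair u \<xi> + dpair v \<xi>"
  by (simp add: dpair_def sum.distrib algebra_simps)
lemma dpair_vsc1: "dpair (vsc c u) \<xi> = c * dpair u \<xi>"
  by (simp add: dpair_def sum_distrib_left algebra_simps)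
lemma dpair_0[simp]: "dpair 0 v = 0" "dpair v 0 = 0" by (simp_all add: dpair_def)
lemma dpair_neg[simp]: "dpair (- u) v = - dpair u v" "dpair v (- u) = - dpair v u"
  by (simp_all add: dpair_def sum_negf)
lemma dpair_diff: "dpair (u - w) v = dpair u v - dpair w v" "dpair v (u - w) = dpair v u - dpair v w"
  by (simp_all add: dpair_def sum_subtractf algebra_simps)
lemma dpair_ev[simp]: "dpair \<xi> (ev c) = \<xi> c" "dpair (ev c) \<xi> = \<xi> c"
  by (simp_all add: dpair_def ev_def)

lemma slin_dpair: "lin f \<Longrightarrow> slin (\<lambda>u. dpair \<xi> (f u))"
  by (simp add: lin_def slin_def dpair_add2 dpair_vsc2)
lemma slin_dpair1: "lin f \<Longrightarrow> slin (\<lambda>u. dpair (f u) v)"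
  by (simp add: lin_def slin_def dpair_add1 dpair_vsc1)
lemma slin_mult: "slin h \<Longrightarrow> slin (\<lambda>u. c * h u)"
  by (simp add: slin_def algebra_simps)
lemma slin_mult2: "slin h \<Longrightarrow> slin (\<lambda>u. h u * c)"
  by (simp add: slin_def algebra_simps)

lemma slin_neg: "slin h \<Longrightarrow> slin (\<lambda>u. - h u)"
  by (simp add: slin_def algebra_simps)

lemma slin_zero: "slin h \<Longrightarrow> h (0::'i\<Rightarrow>'k::field) = 0"
proof -
  assume l: "slin h"
  have "h (vsc 0 0) = 0 * h 0" using l by (simp only: slin_def)
  moreover have "vsc 0 (0::'i\<Rightarrow>'k) = 0" by (rule ext) simp
  ultimately show ?thesis by simp
qed
lemma slin_sum: "slin h \<Longrightarrow> h (\<Sum>i\<in>A. g i) = (\<Sum>i\<in>A. h (g i))"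
proof (cases "finite A")
  case True assume l: "slin h"
  from True show ?thesis
  proof (induction A rule: finite_induct)
    case empty show ?case by (simp only: sum.empty slin_zero[OF l])
  next
    case (insert x F)
    have "h (sum g (insert x F)) = h (g x + sum g F)" by (simp only: sum.insert[OF insert.hyps])
    also have "\<dots> = h (g x) + h (sum g F)" using l by (simp only: slin_def)
    finally show ?case by (simp only: insert.IH sum.insert[OF insert.hyps])
  qed
next
  case False assume l: "slin h" with False show ?thesis by (simp add: slin_zero)
qed

lemma slin_expand: "slin h \<Longrightarrow> h (u::'i::finite \<Rightarrow> 'k::field) = (\<Sum>i\<in>UNIV. u i * h (ev i))"
proof -
  assume l: "slin h"
  have "h u = h (\<Sum>i\<in>UNIV. vsc (u i) (ev i))" using expand_vec[of u] by simp
  also have "\<dots> = (\<Sum>i\<in>UNIV. u i * h (ev i))" using l by (simp add: slin_sum slin_def)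
  finally show ?thesis .
qed



lemma comm_apply: "comm m u v k = m u v k - m v u k" by (simp add: comm_def)
lemma Lcirc_apply: "Lcirc m psi u \<xi> j = - dpair \<xi> (m (psi u) (ev j))" by (simp add: Lcirc_def)
lemma dual_map_apply: "dual_map psi \<xi> k = dpair \<xi> (psi (ev k))" by (simp add: dual_map_def)

lemma mkp_Inl[simp]: "mkp u \<xi> (Inl i) = u i" and mkp_Inr[simp]: "mkp u \<xi> (Inr i) = \<xi> i"
  by (simp_all add: mkp_def)
lemma vpart_mkp[simp]: "vpart (mkp u \<xi>) = u" and dpart_mkp[simp]: "dpart (mkp u \<xi>) = \<xi>"
  by (simp_all add: vpart_def dpart_def mkp_def)
lemma vpart_apply: "vpart x i = x (Inl i)" and dpart_apply: "dpart x i = x (Inr i)"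
  by (simp_all add: vpart_def dpart_def)
lemma vpart_ops[simp]: "vpart (x + y) = vpart x + vpart y" "vpart (- x) = - vpart x" "vpart (x - y) = vpart x - vpart y"
  "vpart 0 = 0" "vpart (vsc c x) = vsc c (vpart x)"
  by (auto simp: vpart_def)
lemma dpart_ops[simp]: "dpart (x + y) = dpart x + dpart y" "dpart (- x) = - dpart x" "dpart (x - y) = dpart x - dpart y"
  "dpart 0 = 0" "dpart (vsc c x) = vsc c (dpart x)"
  by (auto simp: dpart_def)
lemma vpart_ev[simp]: "vpart (ev (Inl c)) = ev c" "vpart (ev (Inr c)) = 0"
  by (auto simp: vpart_def ev_def)
lemma dpart_ev[simp]: "dpart (ev (Inr c)) = ev c" "dpart (ev (Inl c)) = 0"
  by (auto simp: dpart_def ev_def)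
lemma mkp_eq: "x = mkp (vpart x) (dpart x)"
  by (rule ext) (simp add: mkp_def vpart_def dpart_def split: sum.split)

lemma sd_br_Inl[simp]: "sd_br m psi x y (Inl k) = comm m (vpart x) (vpart y) k"
  and sd_br_Inr[simp]: "sd_br m psi x y (Inr k) = Lcirc m psi (vpart x) (dpart y) k - Lcirc m psi (vpart y) (dpart x) k"
  by (simp_all add: sd_br_def)
lemma sd_tw_Inl[simp]: "sd_tw psi x (Inl k) = psi (vpart x) k"
  and sd_tw_Inr[simp]: "sd_tw psi x (Inr k) = dual_map psi (dpart x) k"
  by (simp_all add: sd_tw_def)

lemma dpair_sum: "dpair (x::('n::finite + 'n) \<Rightarrow> 'k::field) y = dpair (vpart x) (vpart y) + dpair (dpart x) (dpart y)"
  by (simp add: dpair_def sum_UNIV_sum vpart_def dpart_def)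

locale lsa_ctx =
  fixes m :: "('n::finite \<Rightarrow> 'k::field) \<Rightarrow> ('n \<Rightarrow> 'k) \<Rightarrow> ('n \<Rightarrow> 'k)"
    and psi :: "('n \<Rightarrow> 'k) \<Rightarrow> ('n \<Rightarrow> 'k)"
  assumes lsa: "hom_lsa m psi"
    and sq: "\<forall>u v. m u v = m (psi (psi u)) v"
begin

lemma bil: "bilin m" using lsa by (simp add: hom_lsa_def)
lemma lpsi: "lin psi" using lsa by (simp add: hom_lsa_def)
lemma psi_mult: "psi (m u v) = m (psi u) (psi v)" using lsa by (simp add: hom_lsa_def)
lemma lsa_id: "m (m u v) (psi w) - m (psi u) (m v w) = m (m v u) (psi w) - m (psi v) (m u w)"
  using lsa by (simp add: hom_lsa_def)
lemma sq': "m (psi (psi u)) v = m u v" using sq by simp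
lemma lm1: "lin (\<lambda>u. m u v)" using bil by (simp add: bilin_def)
lemma lm2: "lin (m u)" using bil by (simp add: bilin_def)

lemma m_simps[simp]: "m 0 v = 0" "m u 0 = 0" "m (- u) v = - m u v" "m u (- v) = - m u v"
  "m (u + u') v = m u v + m u' v" "m u (v + v') = m u v + m u v'"
  "m (u - u') v = m u v - m u' v" "m u (v - v') = m u v - m u v'"
  using lin_zero[OF lm1[of v]] lin_zero[OF lm2[of u]] lin_neg[OF lm1[of v]] lin_neg[OF lm2[of u]]
    lin_add[OF lm1[of v]] lin_add[OF lm2[of u]] lin_diff[OF lm1[of v]] lin_diff[OF lm2[of u]]
  by auto

lemma psi_simps[simp]: "psi 0 = 0" "psi (- u) = - psi u" "psi (u + v) = psi u + psi v" "psi (u - v) = psi u - psi v"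
  using lin_zero[OF lpsi] lin_neg[OF lpsi] lin_add[OF lpsi] lin_diff[OF lpsi] by auto

lemma comm_simps[simp]: "comm m 0 v = 0" "comm m u 0 = 0" "comm m (- u) v = - comm m u v" "comm m u (- v) = - comm m u v"
  by (simp_all add: comm_def)

lemma lcomm2: "lin (comm m u)"
  by (auto simp: lin_def comm_def lin_vsc[OF lm1] lin_vsc[OF lm2] fun_eq_iff algebra_simps)
lemma lcomm1: "lin (\<lambda>u. comm m u v)"
  by (auto simp: lin_def comm_def lin_vsc[OF lm1] lin_vsc[OF lm2] fun_eq_iff algebra_simps)

lemma Lcirc_simps[simp]: "Lcirc m psi 0 \<xi> = 0" "Lcirc m psi u 0 = 0" "Lcirc m psi (- u) \<xi> = - Lcirc m psi u \<xi>"
  "Lcirc m psi u (- \<xi>) = - Lcirc m psi u \<xi>"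
  by (auto simp: Lcirc_def)

lemma dual_map_simps[simp]: "dual_map psi 0 = 0" "dual_map psi (- \<xi>) = - dual_map psi \<xi>"
  by (auto simp: dual_map_def)

lemma dpair_dual_map: "dpair (dual_map psi \<xi>) y = dpair \<xi> (psi y)"
proof -
  have "slin (\<lambda>y. dpair \<xi> (psi y))" by (rule slin_dpair[OF lpsi])
  from slin_expand[OF this, of y] show ?thesis
    by (simp add: dpair_def dual_map_def mult.commute)
qed

lemma dpair_Lcirc: "dpair (Lcirc m psi u \<xi>) y = - dpair \<xi> (m (psi u) y)"
proof -
  have "slin (\<lambda>y. dpair \<xi> (m (psi u) y))" by (rule slin_dpair[OF lm2])
  from slin_expand[OF this, of y] show ?thesis
    by (simp add: dpair_def Lcirc_def mult.commute sum_negf)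
qed

end

locale basis_ctx =
  fixes b bd :: "'n::finite \<Rightarrow> 'n \<Rightarrow> 'k::field"
  assumes basis: "is_basis b"
    and dual: "\<forall>i j. dpair (bd i) (b j) = (if i = j then 1 else 0)"
begin

lemma complete: "w = (\<Sum>i\<in>UNIV. vsc (dpair (bd i) w) (b i))"
proof -
  obtain c where c: "w = (\<Sum>i\<in>UNIV. vsc (c i) (b i))" using basis unfolding is_basis_def by blast
  have sl: "slin (dpair (bd j))" for j by (simp add: slin_def dpair_add2 dpair_vsc2)
  have "dpair (bd j) w = c j" for j
  proof -
    have "dpair (bd j) w = (\<Sum>i\<in>UNIV. dpair (bd j) (vsc (c i) (b i)))"
      using slin_sum[OF sl[of j]] c by metis
    also have "\<dots> = (\<Sum>i\<in>UNIV. c i * (if j = i then 1 else 0))" using dual by (simp add: dpair_vsc2)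
    also have "\<dots> = c j" by simp
    finally show ?thesis .
  qed
  thus ?thesis using c by simp
qed

lemma SC: "slin h \<Longrightarrow> (\<Sum>i\<in>UNIV. dpair (bd i) w * h (b i)) = h w"
proof -
  assume l: "slin h"
  have "h w = h (\<Sum>i\<in>UNIV. vsc (dpair (bd i) w) (b i))" using complete by metis
  also have "\<dots> = (\<Sum>i\<in>UNIV. dpair (bd i) w * h (b i))" using l by (simp add: slin_sum slin_def)
  finally show ?thesis by simp
qed

end


context basis_ctx begin
lemma DC1:
  assumes H: "slin H" and K: "lin K"
  shows "(\<Sum>a\<in>UNIV. \<Sum>aa\<in>UNIV. H (b a) * dpair (bd aa) w * dpair (bd a) (K (b aa))) = H (K w)"
proof -
  have "(\<Sum>aa\<in>UNIV. H (b a) * dpair (bd aa) w * dpair (bd a) (K (b aa))) = H (b a) * dpair (bd a) (K w)" for a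
  proof -
    have "slin (\<lambda>v. H (b a) * dpair (bd a) (K v))" by (rule slin_mult[OF slin_dpair[OF K]])
    from SC[OF this, of w] show ?thesis by (simp add: algebra_simps)
  qed
  hence "(\<Sum>a\<in>UNIV. \<Sum>aa\<in>UNIV. H (b a) * dpair (bd aa) w * dpair (bd a) (K (b aa)))
     = (\<Sum>a\<in>UNIV. dpair (bd a) (K w) * H (b a))" by (simp add: mult.commute)
  also have "\<dots> = H (K w)" by (rule SC[OF H])
  finally show ?thesis .
qed

lemma DC1':
  assumes H: "slin H" and K: "lin K"
  shows "(\<Sum>a\<in>UNIV. \<Sum>aa\<in>UNIV. H (b aa) * dpair (bd a) w * dpair (bd aa) (K (b a))) = H (K w)"
  using DC1[OF H K, of w] sum.swap[of "\<lambda>a aa. H (b aa) * dpair (bd a) w * dpair (bd aa) (K (b a))" UNIV UNIV]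
  by simp

lemma DC2:
  assumes G1: "\<And>u. slin (G u)" and G2: "\<And>v. slin (\<lambda>u. G u v)"
  shows "(\<Sum>a\<in>UNIV. \<Sum>aa\<in>UNIV. G (b a) (b aa) * dpair (bd a) w1 * dpair (bd aa) w2) = G w1 w2"
proof -
  have "(\<Sum>aa\<in>UNIV. G (b a) (b aa) * dpair (bd a) w1 * dpair (bd aa) w2) = dpair (bd a) w1 * G (b a) w2" for a
  proof -
    have "slin (\<lambda>v. dpair (bd a) w1 * G (b a) v)" by (rule slin_mult[OF G1])
    from SC[OF this, of w2] show ?thesis by (simp add: algebra_simps)
  qed
  hence "(\<Sum>a\<in>UNIV. \<Sum>aa\<in>UNIV. G (b a) (b aa) * dpair (bd a) w1 * dpair (bd aa) w2)
     = (\<Sum>a\<in>UNIV. dpair (bd a) w1 * G (b a) w2)" by simp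
  also have "\<dots> = G w1 w2" by (rule SC[OF G2])
  finally show ?thesis .
qed
end

locale full_ctx = lsa_ctx m psi + basis_ctx b bd
  for m :: "('n::finite \<Rightarrow> 'k::field) \<Rightarrow> ('n \<Rightarrow> 'k) \<Rightarrow> ('n \<Rightarrow> 'k)" and psi and b bd :: "'n \<Rightarrow> 'n \<Rightarrow> 'k"
begin

end


context full_ctx begin

lemma cyb_f:
  fixes f
  assumes lf: "lin f" and fpsi: "\<And>u. f (psi u) = psi (f u)" and fm: "\<And>u v. f (m u v) = m (f u) (f v)"
    and fsq: "\<And>u v. m (psi (f (psi u))) v = m u v"
  shows "CYB (sd_br m psi) (sd_tw psi) UNIV (wedge_x (\<lambda>i. mkp 0 (bd i)) (\<lambda>i. mkp (f (b i)) 0))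
     (wedge_y (\<lambda>i. mkp 0 (bd i)) (\<lambda>i. mkp (f (b i)) 0)) = 0"
proof (rule ext)
  fix x :: "('n + 'n) \<times> ('n + 'n) \<times> ('n + 'n)"
  let ?C = "CYB (sd_br m psi) (sd_tw psi) UNIV (wedge_x (\<lambda>i. mkp 0 (bd i)) (\<lambda>i. mkp (f (b i)) 0))
     (wedge_y (\<lambda>i. mkp 0 (bd i)) (\<lambda>i. mkp (f (b i)) 0))"
  note defs = CYB_def sum_apply tensor3_def sum_UNIV_nb wedge_x_def wedge_y_def
  have lpf: "lin (\<lambda>v. psi (f v))" by (rule lin_comp[OF lpsi lf])
  have Hs: "slin (\<lambda>v. - psi (f v) k)" for k by (rule slin_neg[OF slin_coord[OF lpf]])
  have Ks: "lin (\<lambda>v. m (psi (f v)) e)" for e by (rule lin_comp[OF lm1 lpf])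
  have G1: "slin (\<lambda>v. comm m (f u) (f v) k)" for u k
    by (rule slin_coord[OF lin_comp[OF lcomm2 lf]])
  have G2: "slin (\<lambda>u. comm m (f u) (f v) k)" for v k
    by (rule slin_coord[OF lin_comp[OF lcomm1 lf]])
  have key: "comm m (f (psi u)) (f (psi v)) k = psi (f (m u v)) k - psi (f (m v u)) k" for u v k
    by (simp add: comm_def fpsi[symmetric] fm[symmetric] psi_mult)
  obtain x1 x2 x3 where x: "x = (x1, x2, x3)" by (cases x) auto
  show "?C x = 0 x"
  proof (cases x1)
    case (Inl k) note k = this
    show ?thesis
    proof (cases x2)
      case (Inl s) thus ?thesis using x k by (cases x3) (simp_all add: defs)
    next
      case (Inr s) note s = this
      show ?thesis
      proof (cases x3)
        case (Inl t) thus ?thesis using x k s by (simp add: defs)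
      next
        case (Inr t)
        have "?C x = (\<Sum>a\<in>UNIV. \<Sum>aa\<in>UNIV.
           (- psi (f (b a)) k) * dpair (bd aa) (psi (ev s)) * dpair (bd a) (m (psi (f (b aa))) (ev t))
         + (comm m (f (b a)) (f (b aa)) k * dpair (bd a) (psi (ev s)) * dpair (bd aa) (psi (ev t))
         -  (- psi (f (b a)) k) * dpair (bd aa) (psi (ev t)) * dpair (bd a) (m (psi (f (b aa))) (ev s))))"
          using x k s Inr by (simp add: defs Lcirc_apply dual_map_apply algebra_simps)
        also have "\<dots> = (\<Sum>a\<in>UNIV. \<Sum>aa\<in>UNIV.
           (- psi (f (b a)) k) * dpair (bd aa) (psi (ev s)) * dpair (bd a) (m (psi (f (b aa))) (ev t)))
         + ((\<Sum>a\<in>UNIV. \<Sum>aa\<in>UNIV. comm m (f (b a)) (f (b aa)) k * dpair (bd a) (psi (ev s)) * dpair (bd aa) (psi (ev t)))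
         - (\<Sum>a\<in>UNIV. \<Sum>aa\<in>UNIV. (- psi (f (b a)) k) * dpair (bd aa) (psi (ev t)) * dpair (bd a) (m (psi (f (b aa))) (ev s))))"
          by (simp only: sum.distrib sum_subtractf)
        also have "\<dots> = - psi (f (m (psi (f (psi (ev s)))) (ev t))) k
            + (comm m (f (psi (ev s))) (f (psi (ev t))) k - - psi (f (m (psi (f (psi (ev t)))) (ev s))) k)"
          by (simp only: DC1[OF Hs Ks] DC2[OF G1 G2])
        also have "\<dots> = 0" by (simp add: fsq key)
        finally show ?thesis by simp
      qed
    qed
  next
    case (Inr k) note k = this
    show ?thesis
    proof (cases x2)
      case (Inl s) note s = this
      show ?thesis
      proof (cases x3)
        case (Inl t) thus ?thesis using x k s by (simp add: defs)
      next
        case (Inr t)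
        have "?C x = (\<Sum>a\<in>UNIV. \<Sum>aa\<in>UNIV.
           (- psi (f (b a)) s) * dpair (bd aa) (psi (ev t)) * dpair (bd a) (m (psi (f (b aa))) (ev k))
         - (comm m (f (b a)) (f (b aa)) s * dpair (bd a) (psi (ev k)) * dpair (bd aa) (psi (ev t)))
         -  (- psi (f (b aa)) s) * dpair (bd a) (psi (ev k)) * dpair (bd aa) (m (psi (f (b a))) (ev t)))"
          using x k s Inr by (simp add: defs Lcirc_apply dual_map_apply algebra_simps)
        also have "\<dots> = (\<Sum>a\<in>UNIV. \<Sum>aa\<in>UNIV.
           (- psi (f (b a)) s) * dpair (bd aa) (psi (ev t)) * dpair (bd a) (m (psi (f (b aa))) (ev k)))
         - (\<Sum>a\<in>UNIV. \<Sum>aa\<in>UNIV. comm m (f (b a)) (f (b aa)) s * dpair (bd a) (psi (ev k)) * dpair (bd aa) (psi (ev t)))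
         - (\<Sum>a\<in>UNIV. \<Sum>aa\<in>UNIV. (- psi (f (b aa)) s) * dpair (bd a) (psi (ev k)) * dpair (bd aa) (m (psi (f (b a))) (ev t)))"
          by (simp only: sum.distrib sum_subtractf)
        also have "\<dots> = - psi (f (m (psi (f (psi (ev t)))) (ev k))) s
            - comm m (f (psi (ev k))) (f (psi (ev t))) s - - psi (f (m (psi (f (psi (ev k)))) (ev t))) s"
          by (simp only: DC1[OF Hs Ks] DC1'[OF Hs Ks] DC2[OF G1 G2])
        also have "\<dots> = 0" by (simp add: fsq key)
        finally show ?thesis by simp
      qed
    next
      case (Inr s) note s = this
      show ?thesis
      proof (cases x3)
        case (Inr t) thus ?thesis using x k s by (simp add: defs)
      next
        case (Inl t)
        have "?C x = (\<Sum>a\<in>UNIV. \<Sum>aa\<in>UNIV.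
           (- psi (f (b aa)) t) * dpair (bd a) (psi (ev k)) * dpair (bd aa) (m (psi (f (b a))) (ev s))
         + (comm m (f (b a)) (f (b aa)) t * dpair (bd a) (psi (ev k)) * dpair (bd aa) (psi (ev s)))
         -  (- psi (f (b aa)) t) * dpair (bd a) (psi (ev s)) * dpair (bd aa) (m (psi (f (b a))) (ev k)))"
          using x k s Inl by (simp add: defs Lcirc_apply dual_map_apply algebra_simps sum.distrib sum_subtractf sum_negf)
        also have "\<dots> = (\<Sum>a\<in>UNIV. \<Sum>aa\<in>UNIV.
           (- psi (f (b aa)) t) * dpair (bd a) (psi (ev k)) * dpair (bd aa) (m (psi (f (b a))) (ev s)))
         + (\<Sum>a\<in>UNIV. \<Sum>aa\<in>UNIV. comm m (f (b a)) (f (b aa)) t * dpair (bd a) (psi (ev k)) * dpair (bd aa) (psi (ev s)))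
         - (\<Sum>a\<in>UNIV. \<Sum>aa\<in>UNIV. (- psi (f (b aa)) t) * dpair (bd a) (psi (ev s)) * dpair (bd aa) (m (psi (f (b a))) (ev k)))"
          by (simp only: sum.distrib sum_subtractf)
        also have "\<dots> = - psi (f (m (psi (f (psi (ev k)))) (ev s))) t
            + comm m (f (psi (ev k))) (f (psi (ev s))) t - - psi (f (m (psi (f (psi (ev s)))) (ev k))) t"
          by (simp only: DC1'[OF Hs Ks] DC2[OF G1 G2])
        also have "\<dots> = 0" by (simp add: fsq key)
        finally show ?thesis by simp
      qed
    qed
  qed
qed

end


lemma lin_I: "(\<And>u v j. F (u + v) j = F u j + F v j) \<Longrightarrow> (\<And>c u j. F (vsc c u) j = c * F u j) \<Longrightarrow> lin F"
  by (auto simp: lin_def fun_eq_iff)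

lemma sum_fun_cases: "(\<And>k. f (Inl k) = g (Inl k)) \<Longrightarrow> (\<And>k. f (Inr k) = g (Inr k)) \<Longrightarrow> f = g"
  by (rule ext) (case_tac x, auto)

lemma vpart_sd_br[simp]: "vpart (sd_br m psi x y) = comm m (vpart x) (vpart y)"
  and dpart_sd_br[simp]: "dpart (sd_br m psi x y) = Lcirc m psi (vpart x) (dpart y) - Lcirc m psi (vpart y) (dpart x)"
  and vpart_sd_tw[simp]: "vpart (sd_tw psi x) = psi (vpart x)"
  and dpart_sd_tw[simp]: "dpart (sd_tw psi x) = dual_map psi (dpart x)"
  by (simp_all add: sd_br_def sd_tw_def)

context lsa_ctx begin

lemma m_vsc[simp]: "m (vsc c u) v = vsc c (m u v)" "m u (vsc c v) = vsc c (m u v)" "psi (vsc c u) = vsc c (psi u)"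
  using lin_vsc[OF lm1] lin_vsc[OF lm2] lin_vsc[OF lpsi] by auto

lemma Lcirc_lin[simp]: "Lcirc m psi (u + u') \<xi> = Lcirc m psi u \<xi> + Lcirc m psi u' \<xi>"
  "Lcirc m psi u (\<xi> + \<xi>') = Lcirc m psi u \<xi> + Lcirc m psi u \<xi>'"
  "Lcirc m psi (u - u') \<xi> = Lcirc m psi u \<xi> - Lcirc m psi u' \<xi>"
  "Lcirc m psi u (\<xi> - \<xi>') = Lcirc m psi u \<xi> - Lcirc m psi u \<xi>'"
  "Lcirc m psi (vsc c u) \<xi> = vsc c (Lcirc m psi u \<xi>)"
  "Lcirc m psi u (vsc c \<xi>) = vsc c (Lcirc m psi u \<xi>)"
  by (auto simp: Lcirc_def fun_eq_iff dpair_add2 dpair_add1 dpair_diff dpair_vsc1 dpair_vsc2)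

lemma dual_map_lin[simp]: "dual_map psi (\<xi> + \<xi>') = dual_map psi \<xi> + dual_map psi \<xi>'"
  "dual_map psi (\<xi> - \<xi>') = dual_map psi \<xi> - dual_map psi \<xi>'"
  "dual_map psi (vsc c \<xi>) = vsc c (dual_map psi \<xi>)"
  by (auto simp: dual_map_def fun_eq_iff dpair_add1 dpair_diff dpair_vsc1)

lemma comm_lin[simp]: "comm m (u + u') v = comm m u v + comm m u' v" "comm m u (v + v') = comm m u v + comm m u v'"
  "comm m (vsc c u) v = vsc c (comm m u v)" "comm m u (vsc c v) = vsc c (comm m u v)"
  by (auto simp: comm_def fun_eq_iff algebra_simps)

lemma sd_bilin: "bilin (sd_br m psi)"
  unfolding bilin_def
proof (intro conjI allI)
  fix u show "lin (sd_br m psi u)"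
    by (rule lin_I; case_tac j; simp add: algebra_simps)
next
  fix v show "lin (\<lambda>u. sd_br m psi u v)"
    by (rule lin_I; case_tac j; simp add: algebra_simps)
qed

lemma sd_lin: "lin (sd_tw psi)"
  by (rule lin_I; case_tac j; simp add: algebra_simps)

lemma dual_map_Lcirc: "dual_map psi (Lcirc m psi u \<eta>) = Lcirc m psi (psi u) (dual_map psi \<eta>)"
proof (rule ext)
  fix k
  have "dual_map psi (Lcirc m psi u \<eta>) k = - dpair \<eta> (m (psi u) (psi (ev k)))"
    by (simp add: dual_map_apply dpair_Lcirc)
  also have "\<dots> = - dpair \<eta> (psi (m (psi (psi u)) (ev k)))" by (simp add: psi_mult sq'[of "psi u"])
  also have "\<dots> = Lcirc m psi (psi u) (dual_map psi \<eta>) k" by (simp add: Lcirc_apply dpair_dual_map)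
  finally show "dual_map psi (Lcirc m psi u \<eta>) k = Lcirc m psi (psi u) (dual_map psi \<eta>) k" .
qed

lemma rep: "Lcirc m psi (comm m u v) (dual_map psi \<xi>) = Lcirc m psi (psi u) (Lcirc m psi v \<xi>) - Lcirc m psi (psi v) (Lcirc m psi u \<xi>)"
proof (rule ext)
  fix j
  have "Lcirc m psi (comm m u v) (dual_map psi \<xi>) j = - dpair \<xi> (m (comm m u v) (psi (ev j)))"
  proof -
    have e: "psi (m (psi (comm m u v)) (ev j)) = m (comm m u v) (psi (ev j))" by (simp only: psi_mult sq')
    show ?thesis by (simp only: Lcirc_apply dpair_dual_map e)
  qed
  also have "\<dots> = - dpair \<xi> (m (psi u) (m v (ev j)) - m (psi v) (m u (ev j)))"
  proof -
    have "m (m u v) (psi (ev j)) - m (m v u) (psi (ev j)) = m (psi u) (m v (ev j)) - m (psi v) (m u (ev j))"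
      using lsa_id[of u v "ev j"] by (simp add: diff_eq_eq eq_diff_eq algebra_simps)
    thus ?thesis by (simp add: comm_def)
  qed
  also have "\<dots> = (Lcirc m psi (psi u) (Lcirc m psi v \<xi>) - Lcirc m psi (psi v) (Lcirc m psi u \<xi>)) j"
    by (simp add: Lcirc_apply dpair_Lcirc sq' dpair_diff)
  finally show "Lcirc m psi (comm m u v) (dual_map psi \<xi>) j = (Lcirc m psi (psi u) (Lcirc m psi v \<xi>) - Lcirc m psi (psi v) (Lcirc m psi u \<xi>)) j" .
qed

lemma comm_jacobi: "comm m (psi u) (comm m v w) + comm m (psi v) (comm m w u) + comm m (psi w) (comm m u v) = 0"
proof (rule ext)
  fix k
  have i1: "(m (m v w) (psi u) - m (psi v) (m w u) - (m (m w v) (psi u) - m (psi w) (m v u))) k = 0" by (simp add: lsa_id)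
  have i2: "(m (m w u) (psi v) - m (psi w) (m u v) - (m (m u w) (psi v) - m (psi u) (m w v))) k = 0" by (simp add: lsa_id)
  have i3: "(m (m u v) (psi w) - m (psi u) (m v w) - (m (m v u) (psi w) - m (psi v) (m u w))) k = 0" by (simp add: lsa_id)
  have "(comm m (psi u) (comm m v w) + comm m (psi v) (comm m w u) + comm m (psi w) (comm m u v)) k
     = - ((m (m v w) (psi u) - m (psi v) (m w u) - (m (m w v) (psi u) - m (psi w) (m v u))) k
       + (m (m w u) (psi v) - m (psi w) (m u v) - (m (m u w) (psi v) - m (psi u) (m w v))) k
       + (m (m u v) (psi w) - m (psi u) (m v w) - (m (m v u) (psi w) - m (psi v) (m u w))) k)"
    by (simp add: comm_def algebra_simps)
  thus "(comm m (psi u) (comm m v w) + comm m (psi v) (comm m w u) + comm m (psi w) (comm m u v)) k = 0 k"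
    using i1 i2 i3 by simp
qed

lemma sd_hom_lie: "hom_lie (sd_br m psi) (sd_tw psi)"
  unfolding hom_lie_def
proof (intro conjI allI)
  show "bilin (sd_br m psi)" by (rule sd_bilin)
  show "lin (sd_tw psi)" by (rule sd_lin)
next
  fix x y show "sd_br m psi x y = - sd_br m psi y x"
    by (rule sum_fun_cases) (simp_all add: comm_def)
next
  fix x y show "sd_tw psi (sd_br m psi x y) = sd_br m psi (sd_tw psi x) (sd_tw psi y)"
    by (rule sum_fun_cases) (simp_all add: comm_def psi_mult dual_map_Lcirc)
next
  fix x y z
  show "sd_br m psi (sd_tw psi x) (sd_br m psi y z) + sd_br m psi (sd_tw psi y) (sd_br m psi z x) + sd_br m psi (sd_tw psi z) (sd_br m psi x y) = 0"
  proof (rule sum_fun_cases)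
    fix k
    show "(sd_br m psi (sd_tw psi x) (sd_br m psi y z) + sd_br m psi (sd_tw psi y) (sd_br m psi z x) + sd_br m psi (sd_tw psi z) (sd_br m psi x y)) (Inl k) = 0 (Inl k)"
      using fun_cong[OF comm_jacobi[of "vpart x" "vpart y" "vpart z"], of k] by simp
    show "(sd_br m psi (sd_tw psi x) (sd_br m psi y z) + sd_br m psi (sd_tw psi y) (sd_br m psi z x) + sd_br m psi (sd_tw psi z) (sd_br m psi x y)) (Inr k) = 0 (Inr k)"
      by (simp add: rep algebra_simps)
  qed
qed

lemma sd_weakly_inv: "weakly_inv (comm m) psi \<Longrightarrow> weakly_inv (sd_br m psi) (sd_tw psi)"
proof -
  assume wi: "weakly_inv (comm m) psi"
  have r: "m y (psi (psi x)) = m y x" for x y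
    using wi sq'[of x y] unfolding weakly_inv_def comm_def
    by (metis (no_types, lifting) add_diff_cancel_left' diff_add_cancel minus_diff_eq)
  have l1: "Lcirc m psi (psi (psi u)) \<eta> = Lcirc m psi u \<eta>" for u \<eta>
    by (rule ext) (simp add: Lcirc_apply sq'[of "psi u"])
  have l2: "Lcirc m psi v (dual_map psi (dual_map psi \<xi>)) = Lcirc m psi v \<xi>" for v \<xi>
    by (rule ext) (simp add: Lcirc_apply dpair_dual_map psi_mult sq'[of "psi v"] r)
  show ?thesis unfolding weakly_inv_def
  proof (intro allI)
    fix x y show "sd_br m psi (sd_tw psi (sd_tw psi x)) y = sd_br m psi x y"
      using wi by (intro sum_fun_cases) (simp_all add: weakly_inv_def l1 l2)
  qed
qed

end


lemma tmap2_apply': "tmap2 A B t q = (\<Sum>p\<in>UNIV. t p * (A (ev (fst p)) (fst q) * B (ev (snd p)) (snd q)))"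
  by (cases q) (simp add: tmap2_def sum_apply tensor2_def)
lemma tmap2_apply: "tmap2 A B t (x, y) = (\<Sum>p\<in>UNIV. t p * (A (ev (fst p)) x * B (ev (snd p)) y))"
  by (simp add: tmap2_apply')

lemma mult_if0[simp]: "(a::'k::field) * (if P then b else 0) = (if P then a * b else 0)"
  "(if P then b else 0) * a = (if P then b * a else 0)" by simp_all

lemma sum_delta_outer: "(\<Sum>a\<in>(UNIV::'a::finite set). \<Sum>b\<in>(UNIV::'b::finite set). (if x = a then f a b else 0)) = (\<Sum>b\<in>UNIV. (f x b :: 'k::comm_monoid_add))"
proof -
  have "(\<Sum>b\<in>UNIV. (if x = a then f a b else 0)) = (if x = a then (\<Sum>b\<in>UNIV. f a b) else 0)" for a by auto
  thus ?thesis by (simp add: sum.delta')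
qed
lemma sum_delta_inner: "(\<Sum>a\<in>(UNIV::'a::finite set). \<Sum>b\<in>(UNIV::'b::finite set). (if y = b then f a b else 0)) = (\<Sum>a\<in>UNIV. (f a y :: 'k::comm_monoid_add))"
  by (simp add: sum.delta')


lemma tmap2_add_t: "tmap2 A B (t1 + t2) = tmap2 A B t1 + tmap2 A B t2"
  by (rule ext, clarify) (simp add: tmap2_apply sum.distrib algebra_simps)
lemma tmap2_diff_t: "tmap2 A B (t1 - t2) = tmap2 A B t1 - tmap2 A B t2"
  by (rule ext, clarify) (simp add: tmap2_apply sum_subtractf algebra_simps)
lemma tmap2_add_A: "tmap2 (\<lambda>u. A u + A' u) B t = tmap2 A B t + tmap2 A' B t"
  by (rule ext, clarify) (simp add: tmap2_apply sum.distrib algebra_simps)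
lemma tmap2_add_B: "tmap2 A (\<lambda>u. B u + B' u) t = tmap2 A B t + tmap2 A B' t"
  by (rule ext, clarify) (simp add: tmap2_apply sum.distrib algebra_simps)
lemma tmap2_vsc_A: "tmap2 (\<lambda>u. vsc c (A u)) B t = vsc c (tmap2 A B t)"
  by (rule ext, clarify) (simp add: tmap2_apply sum_distrib_left algebra_simps)
lemma tmap2_vsc_B: "tmap2 A (\<lambda>u. vsc c (B u)) t = vsc c (tmap2 A B t)"
  by (rule ext, clarify) (simp add: tmap2_apply sum_distrib_left algebra_simps)

lemma tmap2_comp:
  fixes A B C D :: "('i::finite \<Rightarrow> 'k::field) \<Rightarrow> ('i \<Rightarrow> 'k)"
  assumes A: "lin A" and B: "lin B"
  shows "tmap2 A B (tmap2 C D t) = tmap2 (\<lambda>u. A (C u)) (\<lambda>u. B (D u)) t"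
proof (rule ext, clarify)
  fix x y
  have "tmap2 A B (tmap2 C D t) (x, y)
      = (\<Sum>q\<in>UNIV. (\<Sum>p\<in>UNIV. t p * (C (ev (fst p)) (fst q) * D (ev (snd p)) (snd q))) * (A (ev (fst q)) x * B (ev (snd q)) y))"
    by (simp add: tmap2_apply tmap2_apply'[of C D t])
  also have "\<dots> = (\<Sum>p\<in>UNIV. t p * (\<Sum>q\<in>UNIV. (C (ev (fst p)) (fst q) * A (ev (fst q)) x) * (D (ev (snd p)) (snd q) * B (ev (snd q)) y)))"
  proof -
    have "(\<Sum>q\<in>UNIV. (\<Sum>p\<in>UNIV. t p * (C (ev (fst p)) (fst q) * D (ev (snd p)) (snd q))) * (A (ev (fst q)) x * B (ev (snd q)) y))
      = (\<Sum>q\<in>UNIV. \<Sum>p\<in>UNIV. t p * ((C (ev (fst p)) (fst q) * A (ev (fst q)) x) * (D (ev (snd p)) (snd q) * B (ev (snd q)) y)))"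
      by (simp only: sum_distrib_right) (simp add: algebra_simps)
    also have "\<dots> = (\<Sum>p\<in>UNIV. \<Sum>q\<in>UNIV. t p * ((C (ev (fst p)) (fst q) * A (ev (fst q)) x) * (D (ev (snd p)) (snd q) * B (ev (snd q)) y)))"
      by (rule sum.swap)
    finally show ?thesis by (simp add: sum_distrib_left)
  qed
  also have "\<dots> = (\<Sum>p\<in>UNIV. t p * ((\<Sum>q1\<in>UNIV. C (ev (fst p)) q1 * A (ev q1) x) * (\<Sum>q2\<in>UNIV. D (ev (snd p)) q2 * B (ev q2) y)))"
    by (simp add: sum_product sum_UNIV_prod)
  also have "\<dots> = tmap2 (\<lambda>u. A (C u)) (\<lambda>u. B (D u)) t (x, y)"
  proof -
    have a: "A (C e) x = (\<Sum>q1\<in>UNIV. C e q1 * A (ev q1) x)" for e by (rule lin_expand[OF A])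
    have b: "B (D e) y = (\<Sum>q1\<in>UNIV. D e q1 * B (ev q1) y)" for e by (rule lin_expand[OF B])
    show ?thesis by (simp only: tmap2_apply a b)
  qed
  finally show "tmap2 A B (tmap2 C D t) (x, y) = tmap2 (\<lambda>u. A (C u)) (\<lambda>u. B (D u)) t (x, y)" .
qed

lemma tmap2_id1: "tmap2 id B t (x, y) = (\<Sum>q\<in>UNIV. t (x, q) * B (ev q) y)"
  by (simp add: tmap2_apply sum_UNIV_prod ev_apply sum_delta_outer)
lemma tmap2_id2: "tmap2 A id t (x, y) = (\<Sum>q\<in>UNIV. t (q, y) * A (ev q) x)"
  by (simp add: tmap2_apply sum_UNIV_prod ev_apply mult.commute)

lemma ad_t_cocycle:
  fixes br :: "('i::finite \<Rightarrow> 'k::field) \<Rightarrow> ('i \<Rightarrow> 'k) \<Rightarrow> ('i \<Rightarrow> 'k)"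
  assumes H: "hom_lie br phi"
  shows "ad_t br phi (phi x) (ad_t br phi y t) - ad_t br phi (phi y) (ad_t br phi x t) = ad_t br phi (br x y) (tmap2 phi phi t)"
proof -
  have bl: "bilin br" and lp: "lin phi" and mult: "\<And>x y. phi (br x y) = br (phi x) (phi y)"
    and jac: "\<And>x y z. br (phi x) (br y z) + br (phi y) (br z x) + br (phi z) (br x y) = 0"
    and sk: "\<And>x y. br x y = - br y x"
    using H unfolding hom_lie_def by blast+
  have lb: "lin (br z)" for z using bl by (simp add: bilin_def)
  have J: "br (phi x) (br y u) j = br (phi y) (br x u) j + br (br x y) (phi u) j" for u j
  proof -
    have "br (phi x) (br y u) + br (phi y) (br u x) + br (phi u) (br x y) = 0" by (rule jac)
    hence "br (phi x) (br y u) j + br (phi y) (br u x) j + br (phi u) (br x y) j = 0"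
      by (metis plus_fun_apply zero_fun_apply)
    moreover have "br (phi y) (br u x) = - br (phi y) (br x u)"
      by (subst sk[of u x]) (rule lin_neg[OF lb])
    moreover have "br (phi u) (br x y) = - br (br x y) (phi u)" by (rule sk)
    ultimately show ?thesis by (simp add: algebra_simps)
  qed
  have M: "br (phi z) (phi u) = phi (br z u)" for z u by (simp add: mult)
  show ?thesis
  proof (rule ext, clarify)
    fix a c
    show "(ad_t br phi (phi x) (ad_t br phi y t) - ad_t br phi (phi y) (ad_t br phi x t)) (a, c) = ad_t br phi (br x y) (tmap2 phi phi t) (a, c)"
      by (simp add: ad_t_def tmap2_add_t tmap2_comp[OF lb lp] tmap2_comp[OF lp lb] tmap2_comp[OF lb lb]
          tmap2_comp[OF lp lp] tmap2_apply J M sum_subtractf[symmetric] sum.distrib[symmetric] algebra_simps)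
  qed
qed



definition Rf :: "(('n \<Rightarrow> 'k::field) \<Rightarrow> ('n \<Rightarrow> 'k)) \<Rightarrow> ('n + 'n) \<times> ('n + 'n) \<Rightarrow> 'k" where
  "Rf f = (\<lambda>(x, y). case x of Inl a \<Rightarrow> (case y of Inl _ \<Rightarrow> 0 | Inr c \<Rightarrow> - f (ev c) a)
                           | Inr c \<Rightarrow> (case y of Inl a \<Rightarrow> f (ev c) a | Inr _ \<Rightarrow> 0))"

lemma Rf_simps[simp]: "Rf f (Inl a, Inl a') = 0" "Rf f (Inl a, Inr c) = - f (ev c) a"
  "Rf f (Inr c, Inl a) = f (ev c) a" "Rf f (Inr c, Inr c') = 0"
  by (simp_all add: Rf_def)

definition swp :: "('n + 'n \<Rightarrow> 'k) \<Rightarrow> ('n + 'n \<Rightarrow> 'k)" where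
  "swp x = mkp (dpart x) (vpart x)"

lemma swp_apply[simp]: "swp x (Inl k) = x (Inr k)" "swp x (Inr k) = x (Inl k)"
  by (simp_all add: swp_def dpart_def vpart_def)
lemma vpart_swp[simp]: "vpart (swp x) = dpart x" and dpart_swp[simp]: "dpart (swp x) = vpart x"
  by (simp_all add: swp_def)
lemma swp_swp[simp]: "swp (swp x) = x"
  by (rule sum_fun_cases) simp_all
lemma lin_swp: "lin (swp :: ('n + 'n \<Rightarrow> 'k::field) \<Rightarrow> _)"
  by (rule lin_I; case_tac j; simp)

lemma contraction:
  "(\<Sum>q\<in>UNIV. tmap2 A B t q * (a (fst q) * b (snd q)))
     = (\<Sum>s\<in>UNIV. t s * (dpair a (A (ev (fst s))) * dpair b (B (ev (snd s)))))"
proof -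
  have "(\<Sum>q\<in>UNIV. tmap2 A B t q * (a (fst q) * b (snd q)))
      = (\<Sum>q\<in>UNIV. \<Sum>s\<in>UNIV. t s * ((A (ev (fst s)) (fst q) * a (fst q)) * (B (ev (snd s)) (snd q) * b (snd q))))"
    by (simp only: tmap2_apply' sum_distrib_right) (simp add: algebra_simps)
  also have "\<dots> = (\<Sum>s\<in>UNIV. \<Sum>q\<in>UNIV. t s * ((A (ev (fst s)) (fst q) * a (fst q)) * (B (ev (snd s)) (snd q) * b (snd q))))"
    by (rule sum.swap)
  also have "\<dots> = (\<Sum>s\<in>UNIV. t s * (\<Sum>q1\<in>UNIV. \<Sum>q2\<in>UNIV. (A (ev (fst s)) q1 * a q1) * (B (ev (snd s)) q2 * b q2)))"
    by (simp add: sum_distrib_left sum_UNIV_prod)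
  finally show ?thesis by (simp add: dpair_def sum_product mult.commute)
qed

lemma R1_contr: "(\<Sum>s\<in>UNIV. Rf (\<lambda>x. x) s * (g s :: 'k::field)) = (\<Sum>c\<in>(UNIV::'n::finite set). g (Inr c, Inl c) - g (Inl c, Inr c))"
  by (simp add: sum_UNIV_prod sum_UNIV_sum ev_apply sum.delta sum_subtractf sum_negf)

lemma cobound_lin: "bilin br \<Longrightarrow> lin (cobound br phi r)"
proof -
  assume bl: "bilin br"
  have a: "br (x + y) = (\<lambda>u. br x u + br y u)" for x y
    using lin_add[OF bilin2[OF bl]] by (rule ext) 
  have v: "br (vsc c x) = (\<lambda>u. vsc c (br x u))" for c x
    using lin_vsc[OF bilin2[OF bl]] by (rule ext)
  show ?thesis unfolding lin_def cobound_def ad_t_def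
    by (simp add: a v tmap2_add_A tmap2_add_B tmap2_vsc_A tmap2_vsc_B fun_eq_iff algebra_simps)
qed

context lsa_ctx begin

lemma E1: "tmap2 (sd_tw psi) id (Rf (\<lambda>x. x)) = tmap2 id (sd_tw psi) (Rf (\<lambda>x. x))"
proof (rule ext, clarify)
  fix x y :: "'n + 'n"
  show "tmap2 (sd_tw psi) id (Rf (\<lambda>x. x)) (x, y) = tmap2 id (sd_tw psi) (Rf (\<lambda>x. x)) (x, y)"
    by (cases x; cases y) (simp_all add: tmap2_id1 tmap2_id2 sum_UNIV_sum ev_apply dual_map_apply sum_negf)
qed

lemma E2: "Rf (\<lambda>x. psi (psi x)) = tmap2 id (\<lambda>u. sd_tw psi (sd_tw psi u)) (Rf (\<lambda>x. x))"
proof (rule ext, clarify)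
  fix x y :: "'n + 'n"
  show "Rf (\<lambda>x. psi (psi x)) (x, y) = tmap2 id (\<lambda>u. sd_tw psi (sd_tw psi u)) (Rf (\<lambda>x. x)) (x, y)"
    by (cases x; cases y) (simp_all add: tmap2_id1 sum_UNIV_sum ev_apply dual_map_apply dpair_dual_map sum_negf)
qed

lemma dpair_comm: "dpair u v = dpair v u" by (simp add: dpair_def mult.commute)

lemma DM: "dpair v (dual_map psi (ev c)) = psi v c"
proof -
  have "dual_map psi (ev c) = (\<lambda>j. psi (ev j) c)" by (rule ext) (simp add: dual_map_apply)
  thus ?thesis by (simp add: dpair_def lin_expand[OF lpsi, of v c])
qed
lemma dpair_0'[simp]: "dpair v (\<lambda>a. 0) = 0" "dpair (\<lambda>a. 0) v = 0" by (simp_all add: dpair_def)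
lemma DL: "dpair v (Lcirc m psi u \<xi>) = - dpair \<xi> (m (psi u) v)"
  by (simp add: dpair_comm[of v] dpair_Lcirc)

lemma collapse: "slin h \<Longrightarrow> (\<Sum>c\<in>UNIV. (u::'i::finite \<Rightarrow> 'k::field) c * h (ev c)) = h u"
  by (simp add: slin_expand[of h u])

lemma dualbr_formula: "dual_br (cobound (sd_br m psi) (sd_tw psi) (Rf (\<lambda>x. x))) a b = swp (sd_br m psi (swp a) (swp b))"
proof (rule sum_fun_cases)
  fix k
  let ?a = "dpart a" and ?b = "dpart b" and ?al = "vpart a" and ?be = "vpart b"
  have "dual_br (cobound (sd_br m psi) (sd_tw psi) (Rf (\<lambda>x. x))) a b (Inr k)
     = (\<Sum>c\<in>UNIV. dpair ?a (Lcirc m psi (ev c) (ev k)) * dpair ?b (dual_map psi (ev c))) +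
       (\<Sum>c\<in>UNIV. - (dpair ?a (dual_map psi (ev c)) * dpair ?b (Lcirc m psi (ev c) (ev k))))"
    by (simp add: dual_br_def cobound_def ad_t_def sum.distrib distrib_right contraction R1_contr dpair_sum)
  also have "\<dots> = - (\<Sum>c\<in>UNIV. psi ?b c * m (psi (ev c)) ?a k) + (\<Sum>c\<in>UNIV. psi ?a c * m (psi (ev c)) ?b k)"
    by (simp add: DM DL sum_negf algebra_simps)
  also have "\<dots> = - m (psi (psi ?b)) ?a k + m (psi (psi ?a)) ?b k"
    by (simp only: collapse[OF slin_coord[OF lin_comp[OF lm1 lpsi]]])
  also have "\<dots> = swp (sd_br m psi (swp a) (swp b)) (Inr k)"
    by (simp add: sq' comm_apply)
  finally show "dual_br (cobound (sd_br m psi) (sd_tw psi) (Rf (\<lambda>x. x))) a b (Inr k) = swp (sd_br m psi (swp a) (swp b)) (Inr k)" .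
next
  fix k
  let ?a = "dpart a" and ?b = "dpart b" and ?al = "vpart a" and ?be = "vpart b"
  have "dual_br (cobound (sd_br m psi) (sd_tw psi) (Rf (\<lambda>x. x))) a b (Inl k)
     = (\<Sum>c\<in>UNIV. dpair ?a (Lcirc m psi (ev k) (ev c)) * dpair ?be (psi (ev c))
          - dpair ?al (comm m (ev k) (ev c)) * dpair ?b (dual_map psi (ev c))) +
       (\<Sum>c\<in>UNIV. dpair ?a (dual_map psi (ev c)) * dpair ?be (comm m (ev k) (ev c))
          - dpair ?al (psi (ev c)) * dpair ?b (Lcirc m psi (ev k) (ev c)))"
    by (simp add: dual_br_def cobound_def ad_t_def sum.distrib distrib_right contraction R1_contr dpair_sum)
  also have "\<dots> = - (\<Sum>c\<in>UNIV. m (psi (ev k)) ?a c * dpair ?be (psi (ev c)))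
       - (\<Sum>c\<in>UNIV. psi ?b c * dpair ?al (comm m (ev k) (ev c)))
       + (\<Sum>c\<in>UNIV. psi ?a c * dpair ?be (comm m (ev k) (ev c)))
       + (\<Sum>c\<in>UNIV. m (psi (ev k)) ?b c * dpair ?al (psi (ev c)))"
    by (simp add: DM DL sum_negf sum_subtractf sum.distrib algebra_simps)
  also have "\<dots> = - dpair ?be (psi (m (psi (ev k)) ?a)) - dpair ?al (comm m (ev k) (psi ?b))
       + dpair ?be (comm m (ev k) (psi ?a)) + dpair ?al (psi (m (psi (ev k)) ?b))"
    by (simp only: collapse[OF slin_dpair[OF lpsi]] collapse[OF slin_dpair[OF lcomm2]])
  also have "\<dots> = swp (sd_br m psi (swp a) (swp b)) (Inl k)"
    by (simp add: psi_mult sq' comm_def Lcirc_apply dpair_diff dpair_comm[of _ "m _ _"])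
  finally show "dual_br (cobound (sd_br m psi) (sd_tw psi) (Rf (\<lambda>x. x))) a b (Inl k) = swp (sd_br m psi (swp a) (swp b)) (Inl k)" .
qed

lemma dualmap_formula: "dual_map (sd_tw psi) a = swp (sd_tw psi (swp a))"
proof (rule sum_fun_cases)
  fix k
  show "dual_map (sd_tw psi) a (Inl k) = swp (sd_tw psi (swp a)) (Inl k)"
    by (simp add: dual_map_apply dpair_sum dpair_comm[of "vpart a"])
  show "dual_map (sd_tw psi) a (Inr k) = swp (sd_tw psi (swp a)) (Inr k)"
    by (simp add: dual_map_apply dpair_sum DM)
qed

end

context full_ctx begin
lemma R_explicit: "lin f \<Longrightarrow> tensor_of UNIV (wedge_x (\<lambda>i. mkp 0 (bd i)) (\<lambda>i. mkp (f (b i)) 0))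
     (wedge_y (\<lambda>i. mkp 0 (bd i)) (\<lambda>i. mkp (f (b i)) 0)) = Rf f"
proof (rule ext, clarify)
  fix x y :: "'n + 'n"
  assume lf: "lin f"
  have s: "(\<Sum>i\<in>UNIV. bd i c * f (b i) a) = f (ev c) a" for c a
    using SC[OF slin_coord[OF lf], of "ev c"] by simp
  show "tensor_of UNIV (wedge_x (\<lambda>i. mkp 0 (bd i)) (\<lambda>i. mkp (f (b i)) 0))
     (wedge_y (\<lambda>i. mkp 0 (bd i)) (\<lambda>i. mkp (f (b i)) 0)) (x, y) = Rf f (x, y)"
    by (cases x; cases y) (simp_all add: tensor_of_def sum_apply tensor2_def sum_UNIV_nb wedge_x_def wedge_y_def s
        sum_negf mult.commute[of "f _ _"])
qed
end



lemma id_lam: "(\<lambda>u. u) = id" by (simp add: id_def)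

lemma hom_lie_transfer:
  assumes S: "lin S" and SS: "\<And>x. S (S x) = x" and H: "hom_lie br phi"
  shows "hom_lie (\<lambda>a b. S (br (S a) (S b))) (\<lambda>a. S (phi (S a)))"
proof -
  have bl: "bilin br" and lp: "lin phi" and mult: "\<And>x y. phi (br x y) = br (phi x) (phi y)"
    and jac: "\<And>x y z. br (phi x) (br y z) + br (phi y) (br z x) + br (phi z) (br x y) = 0"
    and sk: "\<And>x y. br x y = - br y x"
    using H unfolding hom_lie_def by blast+
  show ?thesis unfolding hom_lie_def
  proof (intro conjI allI)
    show "bilin (\<lambda>a b. S (br (S a) (S b)))" unfolding bilin_def
    proof (intro conjI allI)
      fix u show "lin (\<lambda>b. S (br (S u) (S b)))"
        by (rule lin_comp[OF S lin_comp[OF bilin1[OF bl] S]])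
    next
      fix v show "lin (\<lambda>a. S (br (S a) (S v)))"
        by (rule lin_comp[OF S lin_comp[OF bilin2[OF bl] S]])
    qed
    show "lin (\<lambda>a. S (phi (S a)))" by (rule lin_comp[OF S lin_comp[OF lp S]])
  next
    fix x y show "S (br (S x) (S y)) = - S (br (S y) (S x))"
      by (subst sk) (rule lin_neg[OF S])
  next
    fix x y show "S (phi (S (S (br (S x) (S y))))) = S (br (S (S (phi (S x)))) (S (S (phi (S y)))))"
      by (simp add: SS mult)
  next
    fix x y z
    have "S (br (phi (S x)) (br (S y) (S z)) + br (phi (S y)) (br (S z) (S x)) + br (phi (S z)) (br (S x) (S y))) = 0"
      by (simp add: jac lin_zero[OF S])
    thus "S (br (S (S (phi (S x)))) (S (S (br (S y) (S z))))) + S (br (S (S (phi (S y)))) (S (S (br (S z) (S x)))))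
       + S (br (S (S (phi (S z)))) (S (S (br (S x) (S y))))) = 0"
      by (simp add: SS lin_add[OF S])
  qed
qed

lemma weakly_inv_transfer:
  assumes SS: "\<And>x. S (S x) = x" and W: "weakly_inv br phi"
  shows "weakly_inv (\<lambda>a b. S (br (S a) (S b))) (\<lambda>a. S (phi (S a)))"
  using W by (simp add: weakly_inv_def SS)

lemma ad_phiphi:
  fixes br :: "('i::finite \<Rightarrow> 'k::field) \<Rightarrow> ('i \<Rightarrow> 'k) \<Rightarrow> ('i \<Rightarrow> 'k)"
  assumes H: "hom_lie br phi" and W: "weakly_inv br phi" and R: "tmap2 phi id R = tmap2 id phi R"
  shows "tmap2 (\<lambda>u. phi (phi u)) id R = tmap2 phi phi R" "tmap2 id (\<lambda>u. phi (phi u)) R = tmap2 phi phi R"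
    and "ad_t br phi z (tmap2 phi phi R) = ad_t br phi z R"
proof -
  have bl: "bilin br" and lp: "lin phi" and sk: "\<And>x y. br x y = - br y x"
    using H unfolding hom_lie_def by blast+
  have lb: "lin (br z)" for z using bl by (simp add: bilin_def)
  have w2: "br z (phi (phi u)) = br z u" for u
  proof -
    have "br z (phi (phi u)) = - br (phi (phi u)) z" by (rule sk)
    also have "\<dots> = - br u z" using W by (simp add: weakly_inv_def)
    also have "\<dots> = br z u" by (subst sk[of u z]) simp
    finally show ?thesis .
  qed
  have a: "tmap2 (\<lambda>u. phi (phi u)) id R = tmap2 phi phi R"
  proof -
    have "tmap2 (\<lambda>u. phi (phi u)) id R = tmap2 phi id (tmap2 phi id R)"
      by (simp add: tmap2_comp[OF lp lin_id'] id_lam)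
    also have "\<dots> = tmap2 phi id (tmap2 id phi R)" by (simp only: R)
    also have "\<dots> = tmap2 phi phi R" by (simp add: tmap2_comp[OF lp lin_id'] id_lam)
    finally show ?thesis .
  qed
  have b: "tmap2 id (\<lambda>u. phi (phi u)) R = tmap2 phi phi R"
  proof -
    have "tmap2 id (\<lambda>u. phi (phi u)) R = tmap2 id phi (tmap2 id phi R)"
      by (simp add: tmap2_comp[OF lin_id' lp] id_lam)
    also have "\<dots> = tmap2 id phi (tmap2 phi id R)" by (simp only: R)
    also have "\<dots> = tmap2 phi phi R" by (simp add: tmap2_comp[OF lin_id' lp] id_lam)
    finally show ?thesis .
  qed
  show "tmap2 (\<lambda>u. phi (phi u)) id R = tmap2 phi phi R" by (rule a)
  show "tmap2 id (\<lambda>u. phi (phi u)) R = tmap2 phi phi R" by (rule b)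
  have "ad_t br phi z (tmap2 phi phi R) = tmap2 (br z) phi (tmap2 (\<lambda>u. phi (phi u)) id R) + tmap2 phi (br z) (tmap2 id (\<lambda>u. phi (phi u)) R)"
    by (simp add: ad_t_def a b)
  also have "\<dots> = ad_t br phi z R"
    by (simp add: ad_t_def tmap2_comp[OF lb lp] tmap2_comp[OF lp lb] w2)
  finally show "ad_t br phi z (tmap2 phi phi R) = ad_t br phi z R" .
qed



context full_ctx begin

lemma bialg_R1:
  assumes wi: "weakly_inv (comm m) psi"
  shows "hom_lie_bialg (sd_br m psi) (sd_tw psi) (cobound (sd_br m psi) (sd_tw psi) (Rf (\<lambda>x. x)))"
proof -
  let ?D = "cobound (sd_br m psi) (sd_tw psi) (Rf (\<lambda>x. x))"
  have db: "dual_br ?D = (\<lambda>a b. swp (sd_br m psi (swp a) (swp b)))"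
    by (rule ext, rule ext, rule dualbr_formula)
  have dm: "dual_map (sd_tw psi) = (\<lambda>a. swp (sd_tw psi (swp a)))"
    by (rule ext, rule dualmap_formula)
  have H: "hom_lie (sd_br m psi) (sd_tw psi)" by (rule sd_hom_lie)
  have W: "weakly_inv (sd_br m psi) (sd_tw psi)" by (rule sd_weakly_inv[OF wi])
  show ?thesis unfolding hom_lie_bialg_def
  proof (intro conjI allI)
    show "hom_lie (sd_br m psi) (sd_tw psi)" by (rule H)
    show "weakly_inv (sd_br m psi) (sd_tw psi)" by (rule W)
    show "lin ?D" by (rule cobound_lin[OF sd_bilin])
    show "hom_lie (dual_br ?D) (dual_map (sd_tw psi))"
      unfolding db dm by (rule hom_lie_transfer[OF lin_swp swp_swp H])
    show "weakly_inv (dual_br ?D) (dual_map (sd_tw psi))"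
      unfolding db dm by (rule weakly_inv_transfer[OF swp_swp W])
  next
    fix x y
    show "?D (sd_br m psi x y) = ad_t (sd_br m psi) (sd_tw psi) (sd_tw psi x) (?D y) - ad_t (sd_br m psi) (sd_tw psi) (sd_tw psi y) (?D x)"
      unfolding cobound_def
      using ad_t_cocycle[OF H, of x y "Rf (\<lambda>x. x)"] ad_phiphi(3)[OF H W E1] by simp
  qed
qed

lemma part_b:
  assumes wi: "weakly_inv (comm m) psi"
  shows "tmap2 (sd_tw psi) id (Rf (\<lambda>x. x)) = tmap2 id (sd_tw psi) (Rf (\<lambda>x. x))
    \<and> tmap2 (sd_tw psi) id (Rf (\<lambda>x. psi (psi x))) = tmap2 id (sd_tw psi) (Rf (\<lambda>x. psi (psi x)))
    \<and> hom_lie_bialg (sd_br m psi) (sd_tw psi) (cobound (sd_br m psi) (sd_tw psi) (Rf (\<lambda>x. x)))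
    \<and> hom_lie_bialg (sd_br m psi) (sd_tw psi) (cobound (sd_br m psi) (sd_tw psi) (Rf (\<lambda>x. psi (psi x))))
    \<and> cobound (sd_br m psi) (sd_tw psi) (Rf (\<lambda>x. x)) = cobound (sd_br m psi) (sd_tw psi) (Rf (\<lambda>x. psi (psi x)))"
proof -
  have H: "hom_lie (sd_br m psi) (sd_tw psi)" by (rule sd_hom_lie)
  have W: "weakly_inv (sd_br m psi) (sd_tw psi)" by (rule sd_weakly_inv[OF wi])
  have lp: "lin (sd_tw psi)" by (rule sd_lin)
  have R2: "Rf (\<lambda>x. psi (psi x)) = tmap2 (sd_tw psi) (sd_tw psi) (Rf (\<lambda>x. x))"
    using E2 ad_phiphi(2)[OF H W E1] by simp
  have cb: "cobound (sd_br m psi) (sd_tw psi) (Rf (\<lambda>x. x)) = cobound (sd_br m psi) (sd_tw psi) (Rf (\<lambda>x. psi (psi x)))"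
    unfolding cobound_def R2 by (rule ext) (simp add: ad_phiphi(3)[OF H W E1])
  have c2: "tmap2 (sd_tw psi) id (Rf (\<lambda>x. psi (psi x))) = tmap2 id (sd_tw psi) (Rf (\<lambda>x. psi (psi x)))"
  proof -
    have "tmap2 (sd_tw psi) id (Rf (\<lambda>x. psi (psi x))) = tmap2 (\<lambda>u. sd_tw psi (sd_tw psi u)) (sd_tw psi) (Rf (\<lambda>x. x))"
      unfolding R2 by (simp add: tmap2_comp[OF lp lin_id'] id_lam)
    also have "\<dots> = tmap2 id (sd_tw psi) (tmap2 (\<lambda>u. sd_tw psi (sd_tw psi u)) id (Rf (\<lambda>x. x)))"
      by (simp add: tmap2_comp[OF lin_id' lp] id_lam)
    also have "\<dots> = tmap2 id (sd_tw psi) (Rf (\<lambda>x. psi (psi x)))"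
      by (simp only: ad_phiphi(1)[OF H W E1] R2)
    finally show ?thesis .
  qed
  show ?thesis using E1 c2 bialg_R1[OF wi] cb by simp
qed

end

theorem corollary5p11:
  fixes m :: "('n::finite \<Rightarrow> 'k::field) \<Rightarrow> ('n \<Rightarrow> 'k) \<Rightarrow> ('n \<Rightarrow> 'k)"
    and psi :: "('n \<Rightarrow> 'k) \<Rightarrow> ('n \<Rightarrow> 'k)"
    and b bd :: "'n \<Rightarrow> 'n \<Rightarrow> 'k"
  assumes lsa: "hom_lsa m psi"
    and sq: "\<forall>u v. m u v = m (psi (psi u)) v"
    and basis: "is_basis b"
    and dual: "\<forall>i j. dpair (bd i) (b j) = (if i = j then 1 else 0)"
  shows "CYB (sd_br m psi) (sd_tw psi) UNIV
            (wedge_x (\<lambda>i. mkp 0 (bd i)) (\<lambda>i. mkp (b i) 0))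
            (wedge_y (\<lambda>i. mkp 0 (bd i)) (\<lambda>i. mkp (b i) 0)) = 0
       \<and> CYB (sd_br m psi) (sd_tw psi) UNIV
            (wedge_x (\<lambda>i. mkp 0 (bd i)) (\<lambda>i. mkp (psi (psi (b i))) 0))
            (wedge_y (\<lambda>i. mkp 0 (bd i)) (\<lambda>i. mkp (psi (psi (b i))) 0)) = 0
       \<and> (weakly_inv (comm m) psi \<longrightarrow>
           (let r1 = tensor_of UNIV
                       (wedge_x (\<lambda>i. mkp 0 (bd i)) (\<lambda>i. mkp (b i) 0))
                       (wedge_y (\<lambda>i. mkp 0 (bd i)) (\<lambda>i. mkp (b i) 0));
                r2 = tensor_of UNIV
                       (wedge_x (\<lambda>i. mkp 0 (bd i)) (\<lambda>i. mkp (psi (psi (b i))) 0))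
                       (wedge_y (\<lambda>i. mkp 0 (bd i)) (\<lambda>i. mkp (psi (psi (b i))) 0))
            in tmap2 (sd_tw psi) id r1 = tmap2 id (sd_tw psi) r1
             \<and> tmap2 (sd_tw psi) id r2 = tmap2 id (sd_tw psi) r2
             \<and> hom_lie_bialg (sd_br m psi) (sd_tw psi) (cobound (sd_br m psi) (sd_tw psi) r1)
             \<and> hom_lie_bialg (sd_br m psi) (sd_tw psi) (cobound (sd_br m psi) (sd_tw psi) r2)
             \<and> cobound (sd_br m psi) (sd_tw psi) r1 = cobound (sd_br m psi) (sd_tw psi) r2))"
proof -
  interpret full_ctx m psi b bd
    by unfold_locales (use lsa sq basis dual in auto)
  have lpp: "lin (\<lambda>x. psi (psi x))" by (rule lin_comp[OF lpsi lpsi])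
  have c1: "CYB (sd_br m psi) (sd_tw psi) UNIV
            (wedge_x (\<lambda>i. mkp 0 (bd i)) (\<lambda>i. mkp (b i) 0))
            (wedge_y (\<lambda>i. mkp 0 (bd i)) (\<lambda>i. mkp (b i) 0)) = 0"
    using cyb_f[of "\<lambda>x. x"] by (simp add: sq')
  have c2: "CYB (sd_br m psi) (sd_tw psi) UNIV
            (wedge_x (\<lambda>i. mkp 0 (bd i)) (\<lambda>i. mkp (psi (psi (b i))) 0))
            (wedge_y (\<lambda>i. mkp 0 (bd i)) (\<lambda>i. mkp (psi (psi (b i))) 0)) = 0"
    using cyb_f[of "\<lambda>x. psi (psi x)", OF lpp] by (simp add: sq' psi_mult)
  have r1: "tensor_of UNIV (wedge_x (\<lambda>i. mkp 0 (bd i)) (\<lambda>i. mkp (b i) 0))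
                       (wedge_y (\<lambda>i. mkp 0 (bd i)) (\<lambda>i. mkp (b i) 0)) = Rf (\<lambda>x. x)"
    using R_explicit[of "\<lambda>x. x"] by simp
  have r2: "tensor_of UNIV (wedge_x (\<lambda>i. mkp 0 (bd i)) (\<lambda>i. mkp (psi (psi (b i))) 0))
                       (wedge_y (\<lambda>i. mkp 0 (bd i)) (\<lambda>i. mkp (psi (psi (b i))) 0)) = Rf (\<lambda>x. psi (psi x))"
    using R_explicit[OF lpp] by simp
  show ?thesis
    unfolding Let_def r1 r2 using c1 c2 part_b by blast
qed


end
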